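(* In the half plane $\mathrm{Re}(s)>\max(1,\sigma_c)$, we have \begin{equation*} (\zeta(s)-1)\varphi(s)^2+\zeta(s)\varphi(s)-\zeta(s)(\zeta(s)-1)=0. \end{equation*}
   Context: For $m,k\in\mathbf{N}$ let $\alpha_k(m)$ be the number of $k$-tuples $(m_1,\dots,m_k)$ of integers $m_i\geq 2$ with $m_1m_2\cdots m_k=m$. Define integers $b_n$ recursively by $b_0=b_1=1$ and $b_n+\sum_{i,j\geq 1,\ i+j=n}b_ib_j=0$ for $n\geq 2$. Let $$a_n=\alpha_1(n)+\sum_{\ell\geq 4}(-1)^\ell\alpha_{\ell-1}(n)\sum_{k=2}^{\lfloor \ell/2\rfloor}b_k\binom{\ell-k-2}{k-2},$$ (with $\binom{a}{b}=0$ unless $a\geq b\geq 0$) and let $\varphi(s)=\sum_{n=1}^\infty a_nn^{-s}$, with abscissa of conditional convergence $\sigma_c$. Here $\zeta(s)$ is the Riemann zeta function. *)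

theory Defs
  imports "HOL-Analysis.Analysis"
begin

definition alpha :: "nat \<Rightarrow> nat \<Rightarrow> nat" where
  "alpha k m = card {xs :: int list. length xs = k \<and> (\<forall>x\<in>set xs. x \<ge> 2) \<and> prod_list xs = int m}"

function b :: "nat \<Rightarrow> int" where
  "b n = (if n \<le> 1 then 1 else - (\<Sum>i\<in>{1..<n}. b i * b (n - i)))"
  by auto
termination
  by (relation "Wellfounded.measure id") auto

definition a :: "nat \<Rightarrow> int" where
  "a n = int (alpha 1 n) +
     (\<Sum>\<^sub>\<infinity>l\<in>{4::nat..}. (-1) ^ l * int (alpha (l - 1) n) *
         (\<Sum>k=2..l div 2. b k * int ((l - k - 2) choose (k - 2))))"

definition phi :: "complex \<Rightarrow> complex" where
  "phi s = (\<Sum>n. of_int (a (Suc n)) / (of_nat (Suc n)) powr s)"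

definition sigma_c :: ereal where
  "sigma_c = Inf {ereal (Re s) | s. summable (\<lambda>n. of_int (a (Suc n)) / (of_nat (Suc n) :: complex) powr s)}"

text \<open>Riemann zeta function, via its Dirichlet series (used only for Re s > 1).\<close>
definition zeta :: "complex \<Rightarrow> complex" where
  "zeta s = (\<Sum>n. 1 / (of_nat (Suc n)) powr s)"

end

theory Submission
  imports Defs "HOL-Complex_Analysis.Complex_Analysis"
begin


lemma powr_diff_bound:
  fixes w :: complex and n :: nat
  assumes w: "Re w > 0" and n: "n \<ge> 1"
  shows "norm (of_nat (Suc n) powr (-w) - of_nat n powr (-w)) \<le> norm w * real n powr (-Re w - 1)"
proof -
  define S where "S = {z::complex. Im z \<ge> 0} \<inter> {z. Im z \<le> 0} \<inter> {z. Re z \<ge> real n} \<inter> {z. Re z \<le> real n + 1}"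
  have cvx: "convex S" unfolding S_def
    by (intro convex_Int convex_halfspace_Re_ge convex_halfspace_Re_le convex_halfspace_Im_ge convex_halfspace_Im_le)
  have mem: "z \<in> S \<Longrightarrow> z \<in> \<real> \<and> Re z \<ge> real n" for z
    by (auto simp: S_def complex_is_Real_iff)
  have "norm ((\<lambda>x. x powr (-w)) (of_nat (Suc n)) - (\<lambda>x. x powr (-w)) (of_nat n))
        \<le> (norm w * real n powr (-Re w - 1)) * norm (of_nat (Suc n) - (of_nat n :: complex))"
  proof (rule field_differentiable_bound[OF cvx])
    fix z assume z: "z \<in> S"
    then have zR: "z \<in> \<real>" and zn: "Re z \<ge> real n" using mem by auto
    have zpos: "Re z > 0" using zn n by linarith
    have "z \<notin> \<real>\<^sub>\<le>\<^sub>0" using zpos by (auto simp: complex_nonpos_Reals_iff)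
    from has_field_derivative_powr[OF this, of "-w"]
    show "((\<lambda>x. x powr (-w)) has_field_derivative (-w * z powr (-w - 1))) (at z within S)"
      by (rule has_field_derivative_at_within)
    have "norm (-w * z powr (-w - 1)) = norm w * Re z powr (-Re w - 1)"
      using zR zpos by (simp add: norm_mult norm_powr_real_powr)
    also have "\<dots> \<le> norm w * real n powr (-Re w - 1)"
      using zn n w by (intro mult_left_mono powr_mono2') auto
    finally show "norm (-w * z powr (-w - 1)) \<le> norm w * real n powr (-Re w - 1)" .
  next
    show "of_nat (Suc n) \<in> S" "of_nat n \<in> S" by (auto simp: S_def)
  qed
  then show ?thesis by simp
qed




lemma dirichlet_main:
  fixes c :: "nat \<Rightarrow> complex" and s0 :: complex
  assumes summ: "summable (\<lambda>n. c n / of_nat (Suc n) powr s0)"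
  shows "(\<lambda>z. \<Sum>n. c n / of_nat (Suc n) powr z) holomorphic_on {z. Re z > Re s0}"
    and "\<And>z. Re z > Re s0 \<Longrightarrow> summable (\<lambda>n. c n / of_nat (Suc n) powr z)"
proof -
  define u where "u n = c n / of_nat (Suc n) powr s0" for n
  define R where "R n = (\<Sum>m. u (m + n))" for n
  have su: "summable u" using summ unfolding u_def by simp
  have Rrec: "R n = u n + R (Suc n)" for n
  proof -
    have s: "summable (\<lambda>m. u (m + n))" using su by simp
    from suminf_split_head[OF s] show ?thesis by (simp add: R_def)
  qed
  have Ralt: "R n = suminf u - (\<Sum>i<n. u i)" for n
    using suminf_split_initial_segment[OF su, of n] by (simp add: R_def)
  have R0: "R \<longlonglongrightarrow> 0"
  proof -
    have "(\<lambda>n. suminf u - (\<Sum>i<n. u i)) \<longlonglongrightarrow> suminf u - suminf u"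
      by (intro tendsto_diff tendsto_const summable_LIMSEQ su)
    moreover have "R = (\<lambda>n. suminf u - (\<Sum>i<n. u i))" by (rule ext) (rule Ralt)
    ultimately show ?thesis by simp
  qed
  obtain M where M: "M > 0" "\<And>n. norm (R n) \<le> M"
  proof -
    have "Bseq R" using R0 convergent_imp_Bseq convergent_def by blast
    then show ?thesis using BseqE that by blast
  qed
  define tt where "tt z n = R (Suc n) * (of_nat (Suc (Suc n)) powr (-(z - s0)) - of_nat (Suc n) powr (-(z - s0)))" for z n
  have ttb: "norm (tt z n) \<le> M * (norm (z - s0) * real (Suc n) powr (-Re (z - s0) - 1))"
    if "Re z > Re s0" for z n
  proof -
    have "norm (tt z n) = norm (R (Suc n)) * norm (of_nat (Suc (Suc n)) powr (-(z - s0)) - of_nat (Suc n) powr (-(z - s0)))"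
      by (simp add: tt_def norm_mult)
    also have "\<dots> \<le> M * (norm (z - s0) * real (Suc n) powr (-Re (z - s0) - 1))"
      using powr_diff_bound[of "z - s0" "Suc n"] that M
      by (intro mult_mono) (auto simp del: of_nat_Suc)
    finally show ?thesis .
  qed
  have sumpow: "summable (\<lambda>n. real (Suc n) powr (- x - 1))" if "x > 0" for x :: real
  proof -
    have "summable (\<lambda>n. real n powr (- x - 1))" using that by (simp add: summable_real_powr_iff)
    then show ?thesis by (subst summable_Suc_iff[of "\<lambda>n. real n powr (- x - 1)"])
  qed
  have tts: "summable (tt z)" if "Re z > Re s0" for z
  proof (rule summable_comparison_test'[where N=0])
    show "summable (\<lambda>n. M * (norm (z - s0) * real (Suc n) powr (-Re (z - s0) - 1)))"
      using sumpow[of "Re (z - s0)"] that by (intro summable_mult) auto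
    show "norm (tt z n) \<le> M * (norm (z - s0) * real (Suc n) powr (-Re (z - s0) - 1))" for n
      using ttb that by blast
  qed
  have rep: "(\<lambda>n. c n / of_nat (Suc n) powr z) sums (R 0 + suminf (tt z))" if z: "Re z > Re s0" for z
  proof -
    define w where "w = z - s0"
    have v: "c n / of_nat (Suc n) powr z = u n * of_nat (Suc n) powr (-w)" for n
    proof -
      have "of_nat (Suc n) powr z = of_nat (Suc n) powr s0 * (of_nat (Suc n) :: complex) powr w"
        by (simp add: w_def flip: powr_add)
      then show ?thesis by (simp add: u_def powr_minus field_simps)
    qed
    have ps: "(\<Sum>n<Suc N. c n / of_nat (Suc n) powr z) =
              R 0 - R (Suc N) * of_nat (Suc N) powr (-w) + (\<Sum>n<N. tt z n)" for N
    proof (induction N)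
      case 0
      then show ?case using Rrec[of 0] by (simp add: v u_def)
    next
      case (Suc N)
      have "(\<Sum>n<Suc (Suc N). c n / of_nat (Suc n) powr z) =
             (\<Sum>n<Suc N. c n / of_nat (Suc n) powr z) + u (Suc N) * of_nat (Suc (Suc N)) powr (-w)"
        using v[of "Suc N"] by (simp del: of_nat_Suc)
      also have "\<dots> = R 0 - R (Suc (Suc N)) * of_nat (Suc (Suc N)) powr (-w) + (\<Sum>n<Suc N. tt z n)"
      proof -
        have e: "u (Suc N) = R (Suc N) - R (Suc (Suc N))" using Rrec[of "Suc N"] by simp
        show ?thesis unfolding Suc.IH sum.lessThan_Suc[of "tt z" N] unfolding tt_def e w_def by algebra
      qed
      finally show ?case .
    qed
    have lim0: "(\<lambda>N. R (Suc N) * of_nat (Suc N) powr (-w)) \<longlonglongrightarrow> 0"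
    proof (rule Lim_null_comparison)
      show "\<forall>\<^sub>F N in sequentially. norm (R (Suc N) * of_nat (Suc N) powr (-w)) \<le> norm (R (Suc N))"
      proof (intro always_eventually allI)
        fix N
        have "norm ((of_nat (Suc N) :: complex) powr (-w)) = real (Suc N) powr (- Re w)"
          by (subst norm_powr_real_powr) auto
        also have "\<dots> \<le> 1" using powr_mono[of "-Re w" 0 "real (Suc N)"] z by (simp add: w_def)
        finally show "norm (R (Suc N) * of_nat (Suc N) powr (-w)) \<le> norm (R (Suc N))"
          by (simp add: norm_mult mult_left_le)
      qed
      show "(\<lambda>N. norm (R (Suc N))) \<longlonglongrightarrow> 0"
        using R0 by (simp add: LIMSEQ_Suc tendsto_norm_zero)
    qed
    have "(\<lambda>N. R 0 - R (Suc N) * of_nat (Suc N) powr (-w) + (\<Sum>n<N. tt z n)) \<longlonglongrightarrow> R 0 - 0 + suminf (tt z)"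
      by (intro tendsto_intros lim0 summable_LIMSEQ tts z)
    then have lim1: "(\<lambda>N. R 0 - R (Suc N) * of_nat (Suc N) powr (-w) + (\<Sum>n<N. tt z n)) \<longlonglongrightarrow> R 0 + suminf (tt z)"
      by simp
    have eqf: "(\<lambda>N. \<Sum>n<Suc N. c n / of_nat (Suc n) powr z) = (\<lambda>N. R 0 - R (Suc N) * of_nat (Suc N) powr (-w) + (\<Sum>n<N. tt z n))"
      by (rule ext) (rule ps)
    have "(\<lambda>N. \<Sum>n<Suc N. c n / of_nat (Suc n) powr z) \<longlonglongrightarrow> R 0 + suminf (tt z)"
      unfolding eqf by (rule lim1)
    then show ?thesis unfolding sums_def by (rule LIMSEQ_imp_Suc)
  qed
  show "summable (\<lambda>n. c n / of_nat (Suc n) powr z)" if "Re z > Re s0" for z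
    using rep[OF that] by (rule sums_summable)
  have hol: "(\<lambda>z. suminf (tt z)) holomorphic_on {z. Re z > Re s0}"
  proof (rule holomorphic_uniform_sequence[where f = "\<lambda>N z. \<Sum>n<N. tt z n"])
    show "open {z. Re z > Re s0}" by (simp add: open_halfspace_Re_gt)
    show "(\<lambda>z. \<Sum>n<N. tt z n) holomorphic_on {z. Re z > Re s0}" for N
      unfolding tt_def by (intro holomorphic_intros)
    fix z0 assume "z0 \<in> {z. Re z > Re s0}"
    then have z0: "Re z0 > Re s0" by simp
    define d where "d = (Re z0 - Re s0) / 2"
    have d: "d > 0" using z0 by (simp add: d_def)
    have Rez: "Re z - Re s0 \<ge> d" if "z \<in> cball z0 d" for z
    proof -
      have "\<bar>Re (z0 - z)\<bar> \<le> d" using that abs_Re_le_cmod[of "z0 - z"] by (simp add: dist_norm)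
      then have "Re z0 - Re z \<le> d" by (simp add: abs_le_iff)
      then show ?thesis by (simp add: d_def)
    qed
    have nz: "norm (z - s0) \<le> norm (z0 - s0) + d" if "z \<in> cball z0 d" for z
    proof -
      have "norm (z - s0) \<le> norm (z - z0) + norm (z0 - s0)"
        using norm_triangle_ineq[of "z - z0" "z0 - s0"] by simp
      then show ?thesis using that by (simp add: dist_norm norm_minus_commute)
    qed
    show "\<exists>d>0. cball z0 d \<subseteq> {z. Re z > Re s0} \<and> uniform_limit (cball z0 d) (\<lambda>N z. \<Sum>n<N. tt z n) (\<lambda>z. suminf (tt z)) sequentially"
    proof (intro exI conjI)
      show "d > 0" by fact
      show "cball z0 d \<subseteq> {z. Re z > Re s0}" using Rez d by force
      show "uniform_limit (cball z0 d) (\<lambda>N z. \<Sum>n<N. tt z n) (\<lambda>z. suminf (tt z)) sequentially"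
      proof (rule Weierstrass_m_test)
        show "summable (\<lambda>n. M * ((norm (z0 - s0) + d) * real (Suc n) powr (- d - 1)))"
          using sumpow[OF d] by (intro summable_mult) auto
        fix n z assume z: "z \<in> cball z0 d"
        have zz: "Re z > Re s0" using Rez[OF z] d by simp
        have "norm (tt z n) \<le> M * (norm (z - s0) * real (Suc n) powr (-Re (z - s0) - 1))"
          using ttb[OF zz] .
        also have "\<dots> \<le> M * ((norm (z0 - s0) + d) * real (Suc n) powr (- d - 1))"
          using M Rez[OF z] nz[OF z] d by (intro mult_left_mono mult_mono powr_mono) auto
        finally show "norm (tt z n) \<le> M * ((norm (z0 - s0) + d) * real (Suc n) powr (- d - 1))" .
      qed
    qed
  qed
  have "(\<lambda>z. R 0 + suminf (tt z)) holomorphic_on {z. Re z > Re s0}"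
    by (intro holomorphic_intros hol)
  then show "(\<lambda>z. \<Sum>n. c n / of_nat (Suc n) powr z) holomorphic_on {z. Re z > Re s0}"
    by (rule holomorphic_transform) (use rep sums_unique in auto)
qed




declare b.simps[simp del]

lemma b_01: "b 0 = 1" "b (Suc 0) = 1" by (simp_all add: b.simps)
lemma b_rec: "n \<ge> 2 \<Longrightarrow> b n = - (\<Sum>i\<in>{1..<n}. b i * b (n - i))"
  by (subst b.simps) simp

definition cc :: "nat \<Rightarrow> int" where
  "cc l = (\<Sum>k=2..l div 2. b k * int ((l - k - 2) choose (k - 2)))"
definition ee :: "nat \<Rightarrow> int" where
  "ee k = (if k = 1 then 1 else 0) + (-1)^(k+1) * cc (k+1)"

definition Bp :: "complex fps" where "Bp = Abs_fps (\<lambda>i. of_int (b (Suc i)))"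
definition Ii :: "complex fps" where "Ii = Abs_fps (\<lambda>n. (-1)^n)"
definition Yf :: "complex fps" where "Yf = fps_X^2 * Ii"
definition Ef :: "complex fps" where "Ef = Abs_fps (\<lambda>k. of_int (ee k))"

lemma Ii_mult: "Ii * (1 + fps_X) = 1"
proof (rule fps_ext)
  fix n
  show "(Ii * (1 + fps_X)) $ n = 1 $ n"
    by (cases n) (simp_all add: Ii_def algebra_simps)
qed

lemma Yf_mult: "Yf * (1 + fps_X) = fps_X^2"
  by (simp add: Yf_def mult.assoc Ii_mult)

lemma Yf_0: "Yf $ 0 = 0" by (simp add: Yf_def)

lemma Bp_eq: "Bp + fps_X * Bp^2 = 1"
proof (rule fps_ext)
  fix n
  show "(Bp + fps_X * Bp^2) $ n = 1 $ n"
  proof (cases n)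
    case 0 then show ?thesis by (simp add: Bp_def b_01)
  next
    case (Suc m)
    have "(Bp^2) $ m = (\<Sum>i=0..m. of_int (b (Suc i) * b (Suc (m - i))))"
      by (simp add: power2_eq_square fps_mult_nth Bp_def)
    also have "\<dots> = (\<Sum>i=0..m. of_int (b (Suc i) * b (Suc (Suc m) - Suc i)))"
      by (intro sum.cong) (auto simp: Suc_diff_le)
    also have "\<dots> = (\<Sum>i\<in>{1..<Suc (Suc m)}. of_int (b i * b (Suc (Suc m) - i)))"
      by (simp only: One_nat_def sum.shift_bounds_Suc_ivl atLeastLessThanSuc_atLeastAtMost sum.shift_bounds_cl_Suc_ivl)
    also have "\<dots> = - of_int (b (Suc (Suc m)))"
      by (subst b_rec[of "Suc (Suc m)"]) simp_all
    finally show ?thesis using Suc by (simp add: Bp_def)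
  qed
qed

lemma Ii_pow: "(Ii ^ Suc i) $ p = (-1)^p * of_nat ((p + i) choose p)"
proof (induction i arbitrary: p)
  case 0 then show ?case by (simp add: Ii_def)
next
  case (Suc i)
  have "(Ii ^ Suc (Suc i)) $ p = (\<Sum>q=0..p. (-1)^q * ((-1)^(p - q) * of_nat ((p - q + i) choose (p - q))))"
    by (simp only: power_Suc[of Ii "Suc i"] fps_mult_nth Suc.IH) (simp add: Ii_def)
  also have "\<dots> = (\<Sum>q=0..p. (-1)^p * of_nat ((i + (p - q)) choose i))"
  proof (intro sum.cong refl)
    fix q assume q: "q \<in> {0..p}"
    have "(-1::complex)^q * (-1)^(p - q) = (-1)^p" using q by (simp flip: power_add)
    moreover have "(p - q + i) choose (p - q) = (i + (p - q)) choose i"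
      by (metis add.commute binomial_symmetric diff_add_inverse le_add2)
    ultimately show "(-1)^q * ((-1)^(p - q) * of_nat ((p - q + i) choose (p - q))) = (-1)^p * (of_nat ((i + (p - q)) choose i) :: complex)"
      by (simp only: mult.assoc[symmetric])
  qed
  also have "\<dots> = (-1)^p * of_nat (\<Sum>r\<le>p. (i + r) choose i)"
  proof -
    have "(\<Sum>q=0..p. of_nat ((i + (p - q)) choose i) :: complex) = (\<Sum>r\<le>p. of_nat ((i + r) choose i))"
      by (rule sum.reindex_bij_witness[where i="\<lambda>r. p - r" and j="\<lambda>q. p - q"]) auto
    then show ?thesis by (simp only: of_nat_sum sum_distrib_left[symmetric])
  qed
  also have "\<dots> = (-1)^p * of_nat ((p + Suc i) choose p)"
    unfolding choose_rising_sum(2) by (simp add: add_ac)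
  finally show ?case .
qed

lemma Yf_pow: "(Yf ^ i) $ m = (if m < 2 * i then 0 else (Ii ^ i) $ (m - 2 * i))"
proof -
  have "Yf ^ i = fps_X ^ (2 * i) * Ii ^ i"
    by (simp add: Yf_def power_mult_distrib power_mult)
  then show ?thesis by (simp add: fps_X_power_mult_nth)
qed

lemma Wp_nth:
  "((Bp oo Yf) $ m) = (if m = 0 then 1 else 0) + (-1)^m * of_int (\<Sum>j=2..(m+2) div 2. b j * int ((m - j) choose (j - 2)))"
proof -
  define f where "f i = Bp $ i * (Yf ^ i $ m)" for i
  have "(Bp oo Yf) $ m = (\<Sum>i=0..m. f i)" by (simp add: fps_compose_nth f_def)
  also have "\<dots> = f 0 + (\<Sum>i=1..m. f i)"
    by (simp add: sum.atLeast_Suc_atMost)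
  also have "f 0 = (if m = 0 then 1 else 0)" by (simp add: f_def Bp_def b_01)
  also have "(\<Sum>i=1..m. f i) = (\<Sum>i=1..m div 2. f i)"
  proof (rule sum.mono_neutral_right)
    show "\<forall>i\<in>{1..m} - {1..m div 2}. f i = 0"
      by (auto simp: f_def Yf_pow)
  qed auto
  also have "\<dots> = (\<Sum>j=2..(m+2) div 2. f (j - 1))"
  proof -
    have "(m + 2) div 2 = Suc (m div 2)" by simp
    then show ?thesis by (simp only: sum.shift_bounds_cl_Suc_ivl numeral_2_eq_2) simp
  qed
  also have "\<dots> = (-1)^m * of_int (\<Sum>j=2..(m+2) div 2. b j * int ((m - j) choose (j - 2)))"
    unfolding of_int_sum sum_distrib_left
  proof (intro sum.cong refl)
    fix j assume j: "j \<in> {2..(m + 2) div 2}"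
    then have j2: "j \<ge> 2" and jm: "2 * j \<le> m + 2" by auto
    obtain i where i: "j = Suc (Suc i)" using j2 by (metis add_2_eq_Suc le_Suc_ex)
    have "f (j - 1) = of_int (b j) * ((-1)^(m - 2 * Suc i) * of_nat ((m - 2 * Suc i + i) choose (m - 2 * Suc i)))"
      using jm i by (simp add: f_def Bp_def Yf_pow Ii_pow del: power_Suc)
    also have "(m - 2 * Suc i + i) choose (m - 2 * Suc i) = (m - j) choose (j - 2)"
    proof -
      have "m - 2 * Suc i + i = m - j" using i jm by simp
      moreover have "(m - j) choose (m - 2 * Suc i) = (m - j) choose (j - 2)"
        using i jm by (subst binomial_symmetric) (auto intro!: arg_cong2[where f="(choose)"])
      ultimately show ?thesis by simp
    qed
    also have "(-1::complex)^(m - 2 * Suc i) = (-1)^m"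
    proof -
      have "m = (m - 2 * Suc i) + 2 * Suc i" using i jm by simp
      then have "(-1::complex)^m = (-1)^(m - 2 * Suc i) * ((-1)^2)^(Suc i)"
        by (metis power_add power_mult)
      then show ?thesis by simp
    qed
    finally show "f (j - 1) = (-1)^m * of_int (b j * int ((m - j) choose (j - 2)))" by simp
  qed
  finally show ?thesis .
qed

lemma Ef_eq: "Ef = fps_X * (Bp oo Yf)"
proof (rule fps_ext)
  fix k
  show "Ef $ k = (fps_X * (Bp oo Yf)) $ k"
  proof (cases k)
    case 0 then show ?thesis by (simp add: Ef_def ee_def cc_def)
  next
    case (Suc m)
    have "cc (Suc m + 1) = (\<Sum>j=2..(m+2) div 2. b j * int ((m - j) choose (j - 2)))"
      unfolding cc_def by (intro sum.cong) auto
    moreover have "(-1::int)^(Suc m + 1) = (-1)^m" by simp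
    ultimately show ?thesis using Suc by (simp add: Ef_def ee_def Wp_nth)
  qed
qed

lemma fps_identity: "fps_X * Ef^2 + (1 + fps_X) * Ef - fps_X * (1 + fps_X) = 0"
proof -
  define W where "W = Bp oo Yf"
  have h3: "W + Yf * W^2 = 1"
  proof -
    have "(Bp + fps_X * Bp^2) oo Yf = 1" by (simp add: Bp_eq)
    then show ?thesis
      by (simp add: fps_compose_add_distrib fps_compose_mult_distrib Yf_0 power2_eq_square W_def)
  qed
  have h2: "Ef = fps_X * W" by (simp add: Ef_eq W_def)
  have h1: "Yf * (1 + fps_X) = fps_X^2" by (rule Yf_mult)
  have "fps_X * (fps_X * Ef^2 + (1 + fps_X) * Ef - fps_X * (1 + fps_X)) = 0"
  proof -
    have "fps_X * (fps_X * Ef^2 + (1 + fps_X) * Ef - fps_X * (1 + fps_X))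
        = fps_X^2 * (1 + fps_X) * (W + Yf * W^2 - 1)"
      unfolding h2 using h1 by algebra
    then show ?thesis by (simp add: h3)
  qed
  then show ?thesis by simp
qed




lemma b_partial:
  defines "x \<equiv> \<lambda>n. real_of_int \<bar>b n\<bar> / 4^n"
  shows "(\<Sum>n=1..N. x n) \<le> 1/2"
proof (induction N)
  case 0 then show ?case by simp
next
  case (Suc M)
  have x0: "x n \<ge> 0" for n by (simp add: x_def)
  have xrec: "x n \<le> (\<Sum>i\<in>{1..<n}. x i * x (n - i))" if "n \<ge> 2" for n
  proof -
    have "\<bar>b n\<bar> \<le> (\<Sum>i\<in>{1..<n}. \<bar>b i\<bar> * \<bar>b (n - i)\<bar>)"
      using b_rec[OF that] by (simp add: abs_mult[symmetric] sum_abs)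
    then have "real_of_int \<bar>b n\<bar> / 4^n \<le> real_of_int (\<Sum>i\<in>{1..<n}. \<bar>b i\<bar> * \<bar>b (n - i)\<bar>) / 4^n"
      by (intro divide_right_mono) (simp only: of_int_le_iff, simp)
    also have "\<dots> = (\<Sum>i\<in>{1..<n}. x i * x (n - i))"
      unfolding of_int_sum sum_divide_distrib
    proof (intro sum.cong refl)
      fix i assume "i \<in> {1..<n}"
      then have "(4::real)^n = 4^i * 4^(n-i)" by (simp flip: power_add)
      then show "real_of_int (\<bar>b i\<bar> * \<bar>b (n - i)\<bar>) / 4 ^ n = x i * x (n - i)"
        by (simp add: x_def)
    qed
    finally show ?thesis by (simp add: x_def)
  qed
  show ?case
  proof (cases "M = 0")
    case True then show ?thesis by (simp add: x_def b_01)
  next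
    case False
    define S where "S = (\<Sum>n=1..M. x n)"
    have S0: "S \<ge> 0" unfolding S_def by (intro sum_nonneg x0)
    have "(\<Sum>n=1..Suc M. x n) = x 1 + (\<Sum>n=2..Suc M. x n)"
      using False by (simp add: sum.atLeast_Suc_atMost numeral_2_eq_2)
    also have "(\<Sum>n=2..Suc M. x n) \<le> (\<Sum>n\<in>{2..Suc M}. \<Sum>i\<in>{i\<in>{1..M}. i < n}. x i * x (n - i))"
    proof (intro sum_mono)
      fix n assume n: "n \<in> {2..Suc M}"
      have "{i\<in>{1..M}. i < n} = {1..<n}" using n by auto
      then show "x n \<le> (\<Sum>i\<in>{i\<in>{1..M}. i < n}. x i * x (n - i))" using xrec n by simp
    qed
    also have "\<dots> = (\<Sum>i\<in>{1..M}. \<Sum>n\<in>{n\<in>{2..Suc M}. i < n}. x i * x (n - i))"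
      by (rule sum.swap_restrict) auto
    also have "\<dots> \<le> (\<Sum>i\<in>{1..M}. x i * S)"
    proof (intro sum_mono)
      fix i assume i: "i \<in> {1..M}"
      have "{n\<in>{2..Suc M}. i < n} = {1 + i..(Suc M - i) + i}" using i by auto
      then have "(\<Sum>n\<in>{n\<in>{2..Suc M}. i < n}. x i * x (n - i)) = (\<Sum>j=1..Suc M - i. x i * x j)"
        by (simp only: sum.shift_bounds_cl_nat_ivl) simp
      also have "\<dots> = x i * (\<Sum>j=1..Suc M - i. x j)" by (simp add: sum_distrib_left)
      also have "\<dots> \<le> x i * S" unfolding S_def
        using i by (intro mult_left_mono sum_mono2 x0) auto
      finally show "(\<Sum>n\<in>{n\<in>{2..Suc M}. i < n}. x i * x (n - i)) \<le> x i * S" .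
    qed
    also have "\<dots> = S * S" by (simp add: S_def sum_distrib_right)
    also have "\<dots> \<le> 1/4"
    proof -
      have "S \<le> 1/2" using Suc.IH by (simp add: S_def)
      then have "S * S \<le> 1/2 * (1/2)" using S0 by (intro mult_mono) auto
      then show ?thesis by simp
    qed
    finally show ?thesis by (simp add: x_def b_01)
  qed
qed

lemma b_bound: "\<bar>b n\<bar> \<le> 4^n"
proof (cases "n = 0")
  case True then show ?thesis by (simp add: b_01)
next
  case False
  have "real_of_int \<bar>b n\<bar> / 4^n \<le> (\<Sum>k=1..n. real_of_int \<bar>b k\<bar> / 4^k)"
    using False by (intro member_le_sum) auto
  also have "\<dots> \<le> 1/2" by (rule b_partial)
  finally have "real_of_int \<bar>b n\<bar> \<le> 4^n / 2" by (simp add: field_simps)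
  moreover have "(0::real) \<le> 4^n" by simp
  ultimately have "real_of_int \<bar>b n\<bar> \<le> 4^n" by linarith
  then have "real_of_int \<bar>b n\<bar> \<le> real_of_int (4^n)" by simp
  then show ?thesis by (simp only: of_int_le_iff)
qed

lemma cc_bound: "\<bar>cc l\<bar> \<le> 16^l"
proof -
  have "\<bar>cc l\<bar> \<le> (\<Sum>k=2..l div 2. \<bar>b k * int ((l - k - 2) choose (k - 2))\<bar>)"
    unfolding cc_def by (rule sum_abs)
  also have "\<dots> \<le> (\<Sum>k=2..l div 2. 4^l * 2^l)"
  proof (intro sum_mono)
    fix k assume k: "k \<in> {2..l div 2}"
    have "\<bar>b k\<bar> \<le> 4^l" using b_bound[of k] k
      by (meson order_trans div_le_dividend atLeastAtMost_iff one_le_numeral power_increasing)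
    moreover have "int ((l - k - 2) choose (k - 2)) \<le> 2^l"
    proof -
      have "(l - k - 2) choose (k - 2) \<le> 2^(l - k - 2)" by (rule binomial_le_pow2)
      also have "\<dots> \<le> 2^l" by (intro power_increasing) auto
      finally show ?thesis by (metis of_nat_le_iff of_nat_numeral of_nat_power)
    qed
    ultimately show "\<bar>b k * int ((l - k - 2) choose (k - 2))\<bar> \<le> 4^l * 2^l"
      by (simp add: abs_mult mult_mono)
  qed
  also have "\<dots> \<le> int l * (4^l * 2^l)" by simp
  also have "\<dots> \<le> 2^l * (4^l * 2^l)"
    by (intro mult_right_mono) (simp_all add: less_imp_le of_nat_less_two_power)
  also have "\<dots> = 16^l" by (simp flip: power_mult_distrib)
  finally show ?thesis .
qed

lemma ee_bound: "\<bar>ee k\<bar> \<le> 32 * 16^k"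
proof -
  have "\<bar>ee k\<bar> \<le> 1 + \<bar>cc (k+1)\<bar>" unfolding ee_def
    using abs_triangle_ineq[of "if k = 1 then 1 else 0" "(-1)^(k+1) * cc (k+1)"] by (auto simp: abs_mult split: if_splits)
  also have "\<dots> \<le> 1 + 16^(k+1)" using cc_bound[of "k+1"] by simp
  also have "\<dots> \<le> 32 * 16^k"
  proof -
    have h: "(1::int) \<le> 16^k" by simp
    have "(16::int)^(k+1) = 16 * 16^k" by simp
    with h show ?thesis by linarith
  qed
  finally show ?thesis .
qed




definition Lall :: "int list set" where "Lall = {xs. \<forall>x\<in>set xs. x \<ge> 2}"
definition fib :: "nat \<Rightarrow> int list set" where "fib n = {xs \<in> Lall. prod_list xs = int n}"

lemma prod_list_ge_pow2: "\<forall>x\<in>set xs. x \<ge> (2::int) \<Longrightarrow> 2 ^ length xs \<le> prod_list xs"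
proof (induction xs)
  case Nil then show ?case by simp
next
  case (Cons y ys)
  then have "2 ^ length ys \<le> prod_list ys" "y \<ge> 2" by auto
  then show ?case by (simp add: mult_mono)
qed

lemma prod_list_ge_mem: "\<forall>x\<in>set xs. x \<ge> (2::int) \<Longrightarrow> y \<in> set xs \<Longrightarrow> y \<le> prod_list xs"
proof (induction xs)
  case Nil then show ?case by simp
next
  case (Cons z zs)
  have p1: "1 \<le> prod_list zs" using prod_list_ge_pow2[of zs] Cons.prems(1)
    by (smt (verit) list.set_intros(2) one_le_power)
  show ?case
  proof (cases "y = z")
    case True then show ?thesis using p1 Cons.prems by (simp add: mult_le_cancel_left1)
  next
    case False
    then have "y \<le> prod_list zs" using Cons by auto
    also have "\<dots> \<le> z * prod_list zs" using Cons.prems p1 by (simp add: mult_le_cancel_right1)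
    finally show ?thesis by simp
  qed
qed

lemma length_lt_of_prod: "\<forall>x\<in>set xs. x \<ge> (2::int) \<Longrightarrow> prod_list xs = int n \<Longrightarrow> length xs < n"
proof -
  assume h: "\<forall>x\<in>set xs. x \<ge> (2::int)" "prod_list xs = int n"
  have "int (length xs) < 2 ^ length xs" by (metis of_nat_less_two_power)
  also have "\<dots> \<le> int n" using prod_list_ge_pow2[OF h(1)] h(2) by simp
  finally show ?thesis by simp
qed

lemma finite_fib: "finite (fib n)"
proof (rule finite_subset)
  show "fib n \<subseteq> {xs. set xs \<subseteq> {2..int n} \<and> length xs \<le> n}"
  proof
    fix xs assume "xs \<in> fib n"
    then have h: "\<forall>x\<in>set xs. x \<ge> 2" "prod_list xs = int n" by (auto simp: fib_def Lall_def)
    have "set xs \<subseteq> {2..int n}" using h prod_list_ge_mem[OF h(1)] by auto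
    moreover have "length xs \<le> n" using length_lt_of_prod[OF h] by simp
    ultimately show "xs \<in> {xs. set xs \<subseteq> {2..int n} \<and> length xs \<le> n}" by simp
  qed
  show "finite {xs. set xs \<subseteq> {2..int n} \<and> length xs \<le> n}"
    by (rule finite_lists_length_le) simp
qed

lemma alpha_fib: "alpha k n = card {xs \<in> fib n. length xs = k}"
  unfolding alpha_def fib_def Lall_def by (intro arg_cong[where f=card]) auto

lemma alpha_zero: "k \<ge> n \<Longrightarrow> alpha k n = 0"
proof -
  assume "k \<ge> n"
  then have "{xs \<in> fib n. length xs = k} = {}"
    using length_lt_of_prod by (force simp: fib_def Lall_def)
  then show ?thesis unfolding alpha_fib by (metis card.empty)
qed

lemma cc_small: "l \<le> 3 \<Longrightarrow> cc l = 0"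
  unfolding cc_def by (intro sum.neutral) auto

lemma a_fib:
  assumes n: "n \<ge> 1"
  shows "a n = (\<Sum>xs\<in>fib n. ee (length xs))"
proof -
  have "(\<Sum>xs\<in>fib n. ee (length xs)) = (\<Sum>k\<in>{..n}. \<Sum>xs\<in>{xs\<in>fib n. length xs = k}. ee (length xs))"
  proof (rule sum.group[symmetric])
    show "finite (fib n)" by (rule finite_fib)
    show "finite {..n}" by simp
    show "length ` fib n \<subseteq> {..n}"
    proof
      fix k assume "k \<in> length ` fib n"
      then obtain xs where xs: "xs \<in> fib n" "k = length xs" by auto
      then have "length xs < n" using length_lt_of_prod by (auto simp: fib_def Lall_def)
      then show "k \<in> {..n}" using xs by simp
    qed
  qed
  also have "\<dots> = (\<Sum>k\<in>{..n}. ee k * int (alpha k n))"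
    by (intro sum.cong refl) (simp add: alpha_fib)
  also have "\<dots> = (\<Sum>k\<in>{..n}. (if k = 1 then int (alpha k n) else 0)) + (\<Sum>k\<in>{..n}. (-1)^(k+1) * int (alpha k n) * cc (k+1))"
    by (simp only: sum.distrib[symmetric]) (intro sum.cong refl, simp add: ee_def algebra_simps)
  also have "(\<Sum>k\<in>{..n}. (if k = 1 then int (alpha k n) else 0)) = int (alpha 1 n)"
    using n by (simp add: sum.delta)
  also have "(\<Sum>k\<in>{..n}. (-1)^(k+1) * int (alpha k n) * cc (k+1)) = (\<Sum>k=3..n. (-1)^(k+1) * int (alpha k n) * cc (k+1))"
    by (rule sum.mono_neutral_right) (auto simp: cc_small)
  also have "\<dots> = (\<Sum>l=4..n+1. (-1)^l * int (alpha (l - 1) n) * cc l)"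
  proof -
    have "(\<Sum>l\<in>{Suc 3..Suc n}. (-1)^l * int (alpha (l - 1) n) * cc l) = (\<Sum>k\<in>{3..n}. (-1)^(Suc k) * int (alpha (Suc k - 1) n) * cc (Suc k))"
      by (rule sum.shift_bounds_cl_Suc_ivl)
    then show ?thesis by simp
  qed
  also have "\<dots> = (\<Sum>\<^sub>\<infinity>l\<in>{4::nat..}. (-1)^l * int (alpha (l - 1) n) * cc l)"
  proof -
    have "(\<Sum>\<^sub>\<infinity>l\<in>{4::nat..}. (-1)^l * int (alpha (l - 1) n) * cc l) = (\<Sum>\<^sub>\<infinity>l\<in>{4..n+1}. (-1)^l * int (alpha (l - 1) n) * cc l)"
      by (rule infsum_cong_neutral) (auto simp: alpha_zero)
    then show ?thesis by simp
  qed
  finally show ?thesis unfolding a_def cc_def by simp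
qed




lemma has_sum_product:
  fixes f g :: "_ \<Rightarrow> 'a::{banach, real_normed_field}"
  assumes f: "(f has_sum F) A" and g: "(g has_sum G) B"
      and nf: "(\<lambda>x. norm (f x)) summable_on A" and ng: "(\<lambda>y. norm (g y)) summable_on B"
  shows "((\<lambda>(x,y). f x * g y) has_sum (F * G)) (A \<times> B)"
proof (rule has_sum_SigmaI[where g = "\<lambda>x. f x * G"])
  show "((\<lambda>y. case (x, y) of (x, y) \<Rightarrow> f x * g y) has_sum f x * G) B" for x
    using has_sum_cmult_right[OF g, of "f x"] by simp
  show "((\<lambda>x. f x * G) has_sum F * G) A" by (rule has_sum_cmult_left[OF f])
  have "(\<lambda>p. norm ((\<lambda>(x,y). f x * g y) p)) summable_on (A \<times> B)"
  proof (rule iffD2[OF Infinite_Sum.abs_summable_on_Sigma_iff], intro conjI ballI)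
    fix x assume "x \<in> A"
    show "(\<lambda>y. norm (case (x, y) of (x, y) \<Rightarrow> f x * g y)) summable_on B"
      using summable_on_cmult_right[OF ng, of "norm (f x)"] by (simp add: norm_mult)
  next
    have "infsum (\<lambda>y. norm (f x) * norm (g y)) B = norm (f x) * infsum (\<lambda>y. norm (g y)) B" for x
      by (rule infsum_cmult_right')
    moreover have "(\<lambda>x. norm (norm (f x) * infsum (\<lambda>y. norm (g y)) B)) summable_on A"
      using summable_on_cmult_left[OF nf, of "infsum (\<lambda>y. norm (g y)) B"]
      by (simp add: norm_mult infsum_nonneg)
    ultimately show "(\<lambda>x. norm (infsum (\<lambda>y. norm (case (x, y) of (x, y) \<Rightarrow> f x * g y)) B)) summable_on A"
      by (simp add: norm_mult)
  qed
  then show "(\<lambda>(x,y). f x * g y) summable_on (A \<times> B)" by (rule abs_summable_summable)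
qed

definition Lk :: "int set \<Rightarrow> nat \<Rightarrow> int list set" where
  "Lk A k = {xs. length xs = k \<and> set xs \<subseteq> A}"

lemma Lk_Suc_bij: "bij_betw (\<lambda>(x,xs). x # xs) (A \<times> Lk A k) (Lk A (Suc k))"
proof (rule bij_betwI')
  show "\<And>x y. x \<in> A \<times> Lk A k \<Longrightarrow> y \<in> A \<times> Lk A k \<Longrightarrow> ((case x of (x, xs) \<Rightarrow> x # xs) = (case y of (x, xs) \<Rightarrow> x # xs)) = (x = y)"
    by auto
  show "\<And>x. x \<in> A \<times> Lk A k \<Longrightarrow> (case x of (x, xs) \<Rightarrow> x # xs) \<in> Lk A (Suc k)"
    by (auto simp: Lk_def)
  show "\<And>y. y \<in> Lk A (Suc k) \<Longrightarrow> \<exists>x\<in>A \<times> Lk A k. y = (case x of (x, xs) \<Rightarrow> x # xs)"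
  proof -
    fix y assume "y \<in> Lk A (Suc k)"
    then obtain z zs where "y = z # zs" "z \<in> A" "zs \<in> Lk A k"
      by (cases y) (auto simp: Lk_def)
    then show "\<exists>x\<in>A \<times> Lk A k. y = (case x of (x, xs) \<Rightarrow> x # xs)" by auto
  qed
qed

lemma has_sum_lists:
  fixes g :: "int \<Rightarrow> 'a::{banach, real_normed_field}"
  assumes g: "(g has_sum G) A" and ng: "((\<lambda>x. norm (g x)) has_sum N) A"
  shows "((\<lambda>xs. prod_list (map g xs)) has_sum G ^ k) (Lk A k) \<and>
         ((\<lambda>xs. norm (prod_list (map g xs))) has_sum N ^ k) (Lk A k)"
proof (induction k)
  case 0
  have "Lk A 0 = {[]}" by (auto simp: Lk_def)
  moreover have "((\<lambda>xs. prod_list (map g xs)) has_sum 1) {[]}"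
    using has_sum_finite[of "{[]}" "\<lambda>xs. prod_list (map g xs)"] by simp
  moreover have "((\<lambda>xs. norm (prod_list (map g xs))) has_sum 1) {[]}"
    using has_sum_finite[of "{[]}" "\<lambda>xs. norm (prod_list (map g xs))"] by simp
  ultimately show ?case by simp
next
  case (Suc k)
  have ngs: "(\<lambda>x. norm (g x)) summable_on A" using ng by (rule has_sum_imp_summable)
  have nps: "(\<lambda>xs. norm (prod_list (map g xs))) summable_on Lk A k"
    using Suc.IH has_sum_imp_summable by blast
  have 1: "((\<lambda>(x,xs). g x * prod_list (map g xs)) has_sum (G * G ^ k)) (A \<times> Lk A k)"
    by (rule has_sum_product[OF g conjunct1[OF Suc.IH] ngs nps])
  have 2: "((\<lambda>(x,xs). norm (g x) * norm (prod_list (map g xs))) has_sum (N * N ^ k)) (A \<times> Lk A k)"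
    by (rule has_sum_product[OF ng conjunct2[OF Suc.IH]]) (use ngs nps in simp_all)
  have e1: "(\<lambda>p. prod_list (map g ((\<lambda>(x,xs). x # xs) p))) = (\<lambda>(x,xs). g x * prod_list (map g xs))"
    by auto
  have e2: "(\<lambda>p. norm (prod_list (map g ((\<lambda>(x,xs). x # xs) p)))) = (\<lambda>(x,xs). norm (g x) * norm (prod_list (map g xs)))"
    by (auto simp: norm_mult)
  show ?case
    using has_sum_reindex_bij_betw[OF Lk_Suc_bij, of "\<lambda>xs. prod_list (map g xs)" A k]
          has_sum_reindex_bij_betw[OF Lk_Suc_bij, of "\<lambda>xs. norm (prod_list (map g xs))" A k]
          1 2 unfolding e1 e2 by simp
qed




lemma bij_int2: "bij_betw (\<lambda>n::nat. int n + 2) UNIV {2..}"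
proof (rule bij_betwI')
  show "\<And>y. y \<in> {2..} \<Longrightarrow> \<exists>x\<in>UNIV. y = int x + 2"
    by (rule_tac x="nat (y - 2)" in bexI) auto
qed auto

lemma has_sum_from_nat2:
  fixes g :: "int \<Rightarrow> 'a::banach"
  assumes "summable (\<lambda>n. norm (g (int n + 2)))" "(\<lambda>n. g (int n + 2)) sums S"
  shows "(g has_sum S) {2..}"
  using has_sum_reindex_bij_betw[OF bij_int2, of g S] norm_summable_imp_has_sum[OF assms] by simp

lemma zeta_tail:
  assumes z: "Re z > 1"
  shows "((\<lambda>m::int. (of_int m :: complex) powr (-z)) has_sum (zeta z - 1)) {2..}"
    and "((\<lambda>m::int. norm ((of_int m :: complex) powr (-z))) has_sum (\<Sum>n. real (n+2) powr (-Re z))) {2..}"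
    and "summable (\<lambda>n. real (n+2) powr (-Re z))"
proof -
  have nrm: "norm ((of_nat k :: complex) powr (-z)) = real k powr (-Re z)" for k
    by (subst norm_powr_real_powr) auto
  have s0: "summable (\<lambda>n. real n powr (-Re z))" using z by (simp add: summable_real_powr_iff)
  show ns: "summable (\<lambda>n. real (n+2) powr (-Re z))"
    using summable_iff_shift[of "\<lambda>n. real n powr (-Re z)" 2] s0 by simp
  have ns1: "summable (\<lambda>n. real (Suc n) powr (-Re z))"
    using summable_iff_shift[of "\<lambda>n. real n powr (-Re z)" 1] s0 by simp
  define f where "f n = 1 / (of_nat (Suc n) :: complex) powr z" for n
  have fn: "f n = (of_nat (Suc n)) powr (-z)" for n by (simp add: f_def powr_minus_divide)
  have "summable (\<lambda>n. norm (f n))" using ns1 by (simp add: fn nrm del: of_nat_Suc)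
  then have sf: "summable f" by (rule summable_norm_cancel)
  have "f sums zeta z" using summable_sums[OF sf] unfolding zeta_def f_def[abs_def] .
  moreover have f0: "f 0 = 1" by (simp add: f_def)
  ultimately have fs: "(\<lambda>n. f (Suc n)) sums (zeta z - 1)" using sums_Suc_iff[of f "zeta z - 1"] by simp
  have e: "(of_int (int n + 2) :: complex) = of_nat (Suc (Suc n))" for n by simp
  have fe: "(\<lambda>n. f (Suc n)) = (\<lambda>n. (of_int (int n + 2) :: complex) powr (-z))"
    by (rule ext) (unfold e, rule fn)
  have sm: "(\<lambda>n. (of_int (int n + 2) :: complex) powr (-z)) sums (zeta z - 1)"
    using fs unfolding fe .
  have nrm2: "norm ((of_int (int n + 2) :: complex) powr (-z)) = real (n+2) powr (-Re z)" for n
    unfolding e using nrm[of "Suc (Suc n)"] by (simp only: of_nat_add numeral_2_eq_2 add_Suc_right add_0_right)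
  show "((\<lambda>m::int. (of_int m :: complex) powr (-z)) has_sum (zeta z - 1)) {2..}"
    by (rule has_sum_from_nat2) (use sm ns nrm2 in simp_all)
  show "((\<lambda>m::int. norm ((of_int m :: complex) powr (-z))) has_sum (\<Sum>n. real (n+2) powr (-Re z))) {2..}"
    by (rule has_sum_from_nat2) (use ns nrm2 in \<open>simp_all add: summable_sums\<close>)
qed

lemma Xn_bound:
  assumes z: "\<sigma> \<ge> 10"
  shows "(\<Sum>n. real (n+2) powr (-\<sigma>)) \<le> 1/128"
proof -
  have h: "(\<lambda>n. 1 / (1 + real n)^2) sums (pi^2/6)" using inverse_squares_sums by simp
  have sq: "(\<lambda>n. 1 / (2 + real n)^2) sums (pi^2/6 - 1)"
    using sums_Suc_iff[of "\<lambda>n. 1 / (1 + real n)^2" "pi^2/6 - 1"] h by simp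
  have tb: "real (n+2) powr (-\<sigma>) \<le> 1/256 * (1 / (2 + real n)^2)" for n
  proof -
    have "real (n+2) powr (-\<sigma>) = real (n+2) powr (-(\<sigma> - 2)) * real (n+2) powr (-2)"
      by (simp flip: powr_add)
    also have "real (n+2) powr (-(\<sigma> - 2)) \<le> 2 powr (-(\<sigma> - 2))"
      using z by (intro powr_mono2') auto
    also have "2 powr (-(\<sigma> - 2)) \<le> (2::real) powr (-8)"
      using z by (intro powr_mono) auto
    also have "(2::real) powr (-8) = 1/256" by (simp add: powr_minus)
    also have "real (n+2) powr (-2) = 1 / (2 + real n)^2"
      by (simp add: powr_minus divide_inverse add.commute)
    finally show ?thesis by (simp add: mult_right_mono)
  qed
  have s1: "summable (\<lambda>n. 1/256 * (1 / (2 + real n)^2))"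
    using sq by (intro summable_mult sums_summable)
  have "(\<Sum>n. real (n+2) powr (-\<sigma>)) \<le> (\<Sum>n. 1/256 * (1 / (2 + real n)^2))"
  proof (rule suminf_le)
    show "summable (\<lambda>n. real (n+2) powr (-\<sigma>))"
      by (rule summable_comparison_test'[OF s1, where N=0]) (use tb in auto)
  qed (use tb s1 in auto)
  also have "\<dots> = 1/256 * (pi^2/6 - 1)" by (rule sums_unique[symmetric], rule sums_mult[OF sq])
  also have "\<dots> \<le> 1/128"
  proof -
    have "pi^2 < 4^2" using pi_less_4 pi_gt3 by (intro power_strict_mono) auto
    then show ?thesis by simp
  qed
  finally show ?thesis .
qed




lemma pl_prod:
  "\<forall>x\<in>set xs. x \<ge> (2::int) \<Longrightarrow> prod_list (map (\<lambda>m. (of_int m :: complex) powr (-z)) xs) = (of_int (prod_list xs)) powr (-z)"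
proof (induction xs)
  case Nil then show ?case by simp
next
  case (Cons y ys)
  have p1: "prod_list ys \<ge> 1" using prod_list_ge_pow2[of ys] Cons.prems
    by (smt (verit) list.set_intros(2) one_le_power)
  have y2: "y \<ge> 2" using Cons.prems by simp
  have "prod_list (map (\<lambda>m. (of_int m :: complex) powr (-z)) (y # ys)) = (of_int y) powr (-z) * (of_int (prod_list ys)) powr (-z)"
    using Cons by simp
  also have "\<dots> = (of_int y * of_int (prod_list ys)) powr (-z)"
    by (rule powr_times_real[symmetric]) (use p1 y2 in auto)
  finally show ?case by simp
qed

lemma bij_Suc1: "bij_betw Suc UNIV {1::nat..}"
proof (rule bij_betwI')
  show "\<And>y. y \<in> {1..} \<Longrightarrow> \<exists>x\<in>UNIV. y = Suc x"
    by (rule_tac x="y - 1" in bexI) auto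
qed auto

lemma phi_eval:
  assumes z: "Re z \<ge> 10"
  shows "phi z = eval_fps Ef (zeta z - 1)" and "norm (zeta z - 1) \<le> 1/128"
proof -
  have z1: "Re z > 1" using z by simp
  define X where "X = zeta z - 1"
  define Xn where "Xn = (\<Sum>n. real (n+2) powr (-Re z))"
  define g where "g m = (of_int m :: complex) powr (-z)" for m :: int
  have gX: "(g has_sum X) {2..}" using zeta_tail(1)[OF z1] by (simp add: g_def[abs_def] X_def)
  have gN: "((\<lambda>m. norm (g m)) has_sum Xn) {2..}" using zeta_tail(2)[OF z1] by (simp add: g_def[abs_def] Xn_def)
  have Xn0: "Xn \<ge> 0" using gN by (rule has_sum_nonneg) simp
  have Xnb: "Xn \<le> 1/128" unfolding Xn_def by (rule Xn_bound) (use z in simp)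
  show "norm (zeta z - 1) \<le> 1/128"
    using norm_has_sum_bound[OF gN gX] Xnb by (simp add: X_def)
  define pl where "pl xs = prod_list (map g xs)" for xs
  have HL: "(pl has_sum X^k) (Lk {2..} k) \<and> ((\<lambda>xs. norm (pl xs)) has_sum Xn^k) (Lk {2..} k)" for k
    unfolding pl_def[abs_def] by (rule has_sum_lists[OF gX gN])
  define F where "F xs = of_int (ee (length xs)) * pl xs" for xs
  define Sg where "Sg = Sigma (UNIV::nat set) (Lk {2..})"
  have bijL: "bij_betw (\<lambda>xs. (length xs, xs)) Lall Sg"
  proof (rule bij_betwI')
    show "\<And>x. x \<in> Lall \<Longrightarrow> (length x, x) \<in> Sg" by (auto simp: Lall_def Sg_def Lk_def)
    show "\<And>y. y \<in> Sg \<Longrightarrow> \<exists>x\<in>Lall. y = (length x, x)" by (auto simp: Lall_def Sg_def Lk_def)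
  qed auto
  have gs: "(\<lambda>k. \<bar>real_of_int (ee k)\<bar> * Xn^k) summable_on UNIV"
  proof (rule summable_nonneg_imp_summable_on)
    show "summable (\<lambda>k. \<bar>real_of_int (ee k)\<bar> * Xn^k)"
    proof (rule summable_comparison_test'[where N=0])
      show "summable (\<lambda>k. 32 * (1/8::real)^k)" by (intro summable_mult summable_geometric) simp
      fix k :: nat
      have e1: "\<bar>real_of_int (ee k)\<bar> \<le> 32 * 16^k"
      proof -
        have "real_of_int \<bar>ee k\<bar> \<le> real_of_int (32 * 16^k)" using ee_bound[of k] by (simp only: of_int_le_iff)
        then show ?thesis by simp
      qed
      have "\<bar>real_of_int (ee k)\<bar> * Xn^k \<le> (32 * 16^k) * (1/128)^k"
        using e1 Xn0 Xnb by (intro mult_mono power_mono) auto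
      also have "\<dots> = 32 * ((16::real) * (1/128))^k" by (simp only: power_mult_distrib mult.assoc)
      also have "\<dots> = 32 * (1/8)^k" by simp
      finally show "norm (\<bar>real_of_int (ee k)\<bar> * Xn^k) \<le> 32 * (1/8)^k" using Xn0 by simp
    qed
  qed (use Xn0 in simp)
  have inner_n: "((\<lambda>xs. norm (F xs)) has_sum (\<bar>real_of_int (ee k)\<bar> * Xn^k)) (Lk {2..} k)" for k
  proof -
    have "((\<lambda>xs. \<bar>real_of_int (ee k)\<bar> * norm (pl xs)) has_sum (\<bar>real_of_int (ee k)\<bar> * Xn^k)) (Lk {2..} k)"
      by (rule has_sum_cmult_right[OF conjunct2[OF HL]])
    then show ?thesis
      by (subst has_sum_cong[where g = "\<lambda>xs. \<bar>real_of_int (ee k)\<bar> * norm (pl xs)"]) (auto simp: F_def Lk_def norm_mult)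
  qed
  have nS: "(\<lambda>(k,xs). norm (F xs)) summable_on Sg"
    unfolding Sg_def by (rule summable_on_SigmaI[OF _ gs]) (use inner_n in auto)
  have nL: "(\<lambda>xs. norm (F xs)) summable_on Lall"
    using summable_on_reindex_bij_betw[OF bijL, of "\<lambda>(k,xs). norm (F xs)"] nS by simp
  have FL: "F summable_on Lall" using nL by (rule abs_summable_summable)
  define S where "S = infsum F Lall"
  have FS: "(F has_sum S) Lall" using FL by (simp add: S_def)
  have FS1: "((\<lambda>(k,xs). F xs) has_sum S) Sg"
    using has_sum_reindex_bij_betw[OF bijL, of "\<lambda>(k,xs). F xs" S] FS by simp
  have inner_k: "((\<lambda>xs. F xs) has_sum (of_int (ee k) * X^k)) (Lk {2..} k)" for k
  proof -
    have "((\<lambda>xs. of_int (ee k) * pl xs) has_sum (of_int (ee k) * X^k)) (Lk {2..} k)"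
      by (rule has_sum_cmult_right[OF conjunct1[OF HL]])
    then show ?thesis
      by (subst has_sum_cong[where g = "\<lambda>xs. of_int (ee k) * pl xs"]) (auto simp: F_def Lk_def)
  qed
  have "((\<lambda>k. of_int (ee k) * X^k) has_sum S) UNIV"
    by (rule has_sum_Sigma'[OF FS1[unfolded Sg_def]]) (use inner_k in simp)
  then have sumk: "(\<lambda>k. of_int (ee k) * X^k) sums S" by (rule has_sum_imp_sums)
  have S_eval: "S = eval_fps Ef X"
    using sums_unique[OF sumk] by (simp add: eval_fps_def Ef_def)
  define Sp where "Sp = Sigma {1::nat..} fib"
  have bijP: "bij_betw (\<lambda>xs. (nat (prod_list xs), xs)) Lall Sp"
  proof (rule bij_betwI')
    fix xs assume xs: "xs \<in> Lall"
    then have p1: "prod_list xs \<ge> 1" using prod_list_ge_pow2[of xs]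
      by (smt (verit) Lall_def mem_Collect_eq one_le_power)
    then show "(nat (prod_list xs), xs) \<in> Sp" using xs by (auto simp: Sp_def fib_def)
  next
    fix y assume "y \<in> Sp"
    then obtain n xs where y: "y = (n, xs)" "n \<ge> 1" "xs \<in> fib n" by (auto simp: Sp_def)
    then show "\<exists>x\<in>Lall. y = (nat (prod_list x), x)" by (auto simp: fib_def)
  qed auto
  have FS2: "((\<lambda>(n,xs). F xs) has_sum S) Sp"
    using has_sum_reindex_bij_betw[OF bijP, of "\<lambda>(n,xs). F xs" S] FS by simp
  have inner_p: "((\<lambda>xs. F xs) has_sum (of_int (a n) * of_nat n powr (-z))) (fib n)" if n: "n \<ge> 1" for n
  proof -
    have "(F has_sum sum F (fib n)) (fib n)" using finite_fib by (rule has_sum_finite)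
    moreover have "sum F (fib n) = of_int (a n) * of_nat n powr (-z)"
    proof -
      have "sum F (fib n) = (\<Sum>xs\<in>fib n. of_int (ee (length xs)) * of_nat n powr (-z))"
      proof (intro sum.cong refl)
        fix xs assume "xs \<in> fib n"
        then have h: "\<forall>x\<in>set xs. x \<ge> 2" "prod_list xs = int n" by (auto simp: fib_def Lall_def)
        have "pl xs = of_nat n powr (-z)" unfolding pl_def g_def using pl_prod[OF h(1), of z] h(2) by simp
        then show "F xs = of_int (ee (length xs)) * of_nat n powr (-z)" by (simp add: F_def)
      qed
      also have "\<dots> = of_int (\<Sum>xs\<in>fib n. ee (length xs)) * of_nat n powr (-z)"
        by (simp add: sum_distrib_right)
      also have "\<dots> = of_int (a n) * of_nat n powr (-z)" using a_fib[OF n] by simp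
      finally show ?thesis .
    qed
    ultimately show ?thesis by simp
  qed
  have "((\<lambda>n. of_int (a n) * of_nat n powr (-z)) has_sum S) {1..}"
    by (rule has_sum_Sigma'[OF FS2[unfolded Sp_def]]) (use inner_p in simp)
  then have "((\<lambda>n. of_int (a (Suc n)) * of_nat (Suc n) powr (-z)) has_sum S) UNIV"
    using has_sum_reindex_bij_betw[OF bij_Suc1, of "\<lambda>n. of_int (a n) * of_nat n powr (-z)" S] by simp
  then have "(\<lambda>n. of_int (a (Suc n)) * of_nat (Suc n) powr (-z)) sums S" by (rule has_sum_imp_sums)
  moreover have "(\<lambda>n. of_int (a (Suc n)) * of_nat (Suc n) powr (-z)) = (\<lambda>n. of_int (a (Suc n)) / (of_nat (Suc n) :: complex) powr z)"
    by (simp add: powr_minus divide_inverse)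
  ultimately have "(\<lambda>n. of_int (a (Suc n)) / (of_nat (Suc n) :: complex) powr z) sums S" by simp
  then have "phi z = S" unfolding phi_def by (rule sums_unique[symmetric])
  then show "phi z = eval_fps Ef (zeta z - 1)" using S_eval by (simp add: X_def)
qed




lemma Ef_radius: "fps_conv_radius Ef \<ge> ereal (1/32)"
  unfolding fps_conv_radius_def
proof (rule conv_radius_geI_ex')
  fix r :: real assume r: "0 < r" "ereal r < ereal (1/32)"
  then have r32: "r < 1/32" by simp
  show "summable (\<lambda>n. fps_nth Ef n * of_real r ^ n)"
  proof (rule summable_norm_cancel, rule summable_comparison_test'[where N=0])
    show "summable (\<lambda>n. 32 * (16 * r)^n)"
      using r r32 by (intro summable_mult summable_geometric) auto
    fix n :: nat
    have e1: "\<bar>real_of_int (ee n)\<bar> \<le> 32 * 16^n"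
    proof -
      have "real_of_int \<bar>ee n\<bar> \<le> real_of_int (32 * 16^n)" using ee_bound[of n] by (simp only: of_int_le_iff)
      then show ?thesis by simp
    qed
    have "norm (norm (fps_nth Ef n * of_real r ^ n)) = \<bar>real_of_int (ee n)\<bar> * r^n"
      using r by (simp add: Ef_def norm_mult norm_power)
    also have "\<dots> \<le> (32 * 16^n) * r^n" using e1 r by (intro mult_right_mono) auto
    also have "\<dots> = 32 * (16 * r)^n" by (simp add: power_mult_distrib)
    finally show "norm (norm (fps_nth Ef n * of_real r ^ n)) \<le> 32 * (16 * r)^n" .
  qed
qed

lemma radius_le: "ereal r < A \<Longrightarrow> ereal r < B \<Longrightarrow> min A B \<le> C \<Longrightarrow> ereal r < C"
  by (metis min_less_iff_conj less_le_trans)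

lemma identity_large:
  assumes z: "Re z \<ge> 10"
  shows "(zeta z - 1) * (phi z)^2 + zeta z * phi z - zeta z * (zeta z - 1) = 0"
proof -
  define X where "X = zeta z - 1"
  have ph: "phi z = eval_fps Ef X" using phi_eval(1)[OF z] by (simp add: X_def)
  have nX: "norm X \<le> 1/128" using phi_eval(2)[OF z] by (simp add: X_def)
  have hE: "ereal (norm X) < fps_conv_radius Ef"
  proof -
    have "ereal (norm X) < ereal (1/32)" using nX by simp
    then show ?thesis using Ef_radius by (rule less_le_trans)
  qed
  have hE2: "ereal (norm X) < fps_conv_radius (Ef^2)"
    using hE fps_conv_radius_power[of Ef 2] by (rule less_le_trans)
  have hXE2: "ereal (norm X) < fps_conv_radius (fps_X * Ef^2)"
    by (rule radius_le[OF _ hE2 fps_conv_radius_mult]) simp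
  have h1X: "ereal (norm X) < fps_conv_radius (1 + fps_X :: complex fps)"
    by (rule radius_le[OF _ _ fps_conv_radius_add]) simp_all
  have h1XE: "ereal (norm X) < fps_conv_radius ((1 + fps_X) * Ef)"
    by (rule radius_le[OF h1X hE fps_conv_radius_mult])
  have hX1X: "ereal (norm X) < fps_conv_radius (fps_X * (1 + fps_X) :: complex fps)"
    by (rule radius_le[OF _ h1X fps_conv_radius_mult]) simp
  have hsum: "ereal (norm X) < fps_conv_radius (fps_X * Ef^2 + (1 + fps_X) * Ef)"
    by (rule radius_le[OF hXE2 h1XE fps_conv_radius_add])
  have ev1X: "eval_fps (1 + fps_X) X = 1 + X"
    by (subst eval_fps_add) auto
  have "eval_fps (fps_X * Ef^2 + (1 + fps_X) * Ef - fps_X * (1 + fps_X)) X = 0"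
    by (simp add: fps_identity)
  moreover have "eval_fps (fps_X * Ef^2 + (1 + fps_X) * Ef - fps_X * (1 + fps_X)) X
      = X * (eval_fps Ef X)^2 + (1 + X) * eval_fps Ef X - X * (1 + X)"
    using hXE2 h1XE hX1X hsum hE hE2 h1X
    by (simp add: eval_fps_diff eval_fps_add eval_fps_mult eval_fps_power ev1X)
  ultimately have "X * (eval_fps Ef X)^2 + (1 + X) * eval_fps Ef X - X * (1 + X) = 0" by simp
  then have "X * (phi z)^2 + (1 + X) * phi z - X * (1 + X) = 0" unfolding ph .
  then show ?thesis unfolding X_def by (simp add: algebra_simps)
qed




lemma zeta_hol:
  assumes "\<rho> > 1"
  shows "zeta holomorphic_on {z. Re z > \<rho>}"
proof -
  have "summable (\<lambda>n. 1 / of_nat (Suc n) powr (of_real \<rho> :: complex))"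
  proof (rule summable_norm_cancel)
    have "summable (\<lambda>n. real n powr (-\<rho>))" using assms by (simp add: summable_real_powr_iff)
    then have "summable (\<lambda>n. real (Suc n) powr (-\<rho>))" by (subst summable_Suc_iff)
    moreover have "norm (1 / of_nat (Suc n) powr (of_real \<rho> :: complex)) = real (Suc n) powr (-\<rho>)" for n
      by (simp add: norm_divide norm_inverse norm_powr_real_powr powr_minus divide_inverse del: of_nat_Suc)
    ultimately show "summable (\<lambda>n. norm (1 / of_nat (Suc n) powr (of_real \<rho> :: complex)))" by simp
  qed
  from dirichlet_main(1)[OF this] show ?thesis unfolding zeta_def by simp
qed

theorem theorem10p2:
  fixes s :: complex
  assumes "ereal (Re s) > max 1 sigma_c"
  shows "(zeta s - 1) * (phi s)^2 + zeta s * phi s - zeta s * (zeta s - 1) = 0"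
proof -
  have s1: "Re s > 1" using assms by simp
  have "sigma_c < ereal (Re s)" using assms by simp
  then obtain s0 where s0: "summable (\<lambda>n. of_int (a (Suc n)) / (of_nat (Suc n) :: complex) powr s0)"
    and s0s: "Re s0 < Re s"
    unfolding sigma_c_def by (auto simp: Inf_less_iff)
  define \<rho> where "\<rho> = (max 1 (Re s0) + Re s) / 2"
  have \<rho>: "\<rho> > 1" "\<rho> > Re s0" "Re s > \<rho>" using s1 s0s by (auto simp: \<rho>_def)
  define H where "H = {z. Re z > \<rho>}"
  have phol: "phi holomorphic_on H"
  proof -
    have "(\<lambda>z. \<Sum>n. of_int (a (Suc n)) / of_nat (Suc n) powr z) holomorphic_on {z. Re z > Re s0}"
      by (rule dirichlet_main(1)[OF s0])
    then have "phi holomorphic_on {z. Re z > Re s0}" unfolding phi_def by simp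
    then show ?thesis by (rule holomorphic_on_subset) (use \<rho> in \<open>auto simp: H_def\<close>)
  qed
  have zhol: "zeta holomorphic_on H" unfolding H_def by (rule zeta_hol) (use \<rho> in auto)
  define F where "F z = (zeta z - 1) * (phi z)^2 + zeta z * phi z - zeta z * (zeta z - 1)" for z
  have Fhol: "F holomorphic_on H" unfolding F_def using phol zhol by (intro holomorphic_intros)
  define U where "U = {z. Re z > max 10 \<rho>}"
  have "F s = (\<lambda>_. 0) s"
  proof (rule analytic_continuation_open[of U H F "\<lambda>_. 0" s])
    show "open U" unfolding U_def by (rule open_halfspace_Re_gt)
    show "open H" unfolding H_def by (rule open_halfspace_Re_gt)
    have "of_real (max 10 \<rho> + 1) \<in> U" unfolding U_def by (simp add: max_def)
    then show "U \<noteq> {}" by blast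
    show "connected H" unfolding H_def by (rule convex_connected) (rule convex_halfspace_Re_gt)
    show "U \<subseteq> H" unfolding U_def H_def by auto
    show "F holomorphic_on H" by fact
    show "(\<lambda>_. 0) holomorphic_on H" by simp
    show "s \<in> H" unfolding H_def using \<rho> by simp
    fix z assume "z \<in> U"
    then have "Re z \<ge> 10" unfolding U_def by simp
    then show "F z = 0" unfolding F_def by (rule identity_large)
  qed
  then show ?thesis by (simp add: F_def)
qed


end
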